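(* Let $G$ be a finite nilpotent group, $f\in\mathrm{Aut}(G)$, $Q=\mathcal{Q}(G,f)$, and let $E$ be a finite connected cover of $Q$. Then $\mathrm{rad}(|E|)=\mathrm{rad}(|Q|)$.
   Context: A quandle is a set $Q$ with a binary operation $*$ such that every left translation $L_x:y\mapsto x*y$ is bijective, $x*(y*z)=(x*y)*(x*z)$ and $x*x=x$; $Q$ is connected if $\langle L_x:x\in Q\rangle$ is transitive. $\mathcal{Q}(G,f)$ is $G$ with $x*y=xf(x^{-1}y)$. A cover of $Q$ is a quandle $E$ with a surjective quandle homomorphism $\pi:E\to Q$ such that $\pi(u)=\pi(v)$ implies $L_u=L_v$ in $E$; it is a connected cover if $E$ is connected. For $n\in\mathbb{N}$, $\mathrm{rad}(n)$ is the product of the distinct primes dividing $n$. *)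

theory Defs
  imports "HOL-Algebra.Algebra" "HOL-Computational_Algebra.Primes"
begin

fun lower_central :: "('a, 'b) monoid_scheme \<Rightarrow> nat \<Rightarrow> 'a set" where
  "lower_central G 0 = carrier G"
| "lower_central G (Suc n) = generate G
     (\<Union>x \<in> carrier G. \<Union>y \<in> lower_central G n.
        { x \<otimes>\<^bsub>G\<^esub> y \<otimes>\<^bsub>G\<^esub> inv\<^bsub>G\<^esub> x \<otimes>\<^bsub>G\<^esub> inv\<^bsub>G\<^esub> y })"

definition nilpotent_group :: "('a, 'b) monoid_scheme \<Rightarrow> bool" where
  "nilpotent_group G \<longleftrightarrow> group G \<and> (\<exists>n. lower_central G n = {\<one>\<^bsub>G\<^esub>})"

definition quandle :: "'a set \<Rightarrow> ('a \<Rightarrow> 'a \<Rightarrow> 'a) \<Rightarrow> bool" where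
  "quandle Q op \<longleftrightarrow>
     (\<forall>x\<in>Q. bij_betw (op x) Q Q) \<and>
     (\<forall>x\<in>Q. \<forall>y\<in>Q. \<forall>z\<in>Q. op x (op y z) = op (op x y) (op x z)) \<and>
     (\<forall>x\<in>Q. op x x = x)"

text \<open>Left translations L_x, as elements of the group of bijections of Q.\<close>
definition left_translations :: "'a set \<Rightarrow> ('a \<Rightarrow> 'a \<Rightarrow> 'a) \<Rightarrow> ('a \<Rightarrow> 'a) set" where
  "left_translations Q op = {(\<lambda>y\<in>Q. op x y) | x. x \<in> Q}"

definition connected_quandle :: "'a set \<Rightarrow> ('a \<Rightarrow> 'a \<Rightarrow> 'a) \<Rightarrow> bool" where
  "connected_quandle Q op \<longleftrightarrow> quandle Q op \<and>
     (\<forall>a\<in>Q. \<forall>b\<in>Q. \<exists>\<sigma> \<in> generate (BijGroup Q) (left_translations Q op). \<sigma> a = b)"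

definition QGf_op :: "('a, 'b) monoid_scheme \<Rightarrow> ('a \<Rightarrow> 'a) \<Rightarrow> 'a \<Rightarrow> 'a \<Rightarrow> 'a" where
  "QGf_op G f x y = x \<otimes>\<^bsub>G\<^esub> f (inv\<^bsub>G\<^esub> x \<otimes>\<^bsub>G\<^esub> y)"

definition quandle_cover ::
  "'e set \<Rightarrow> ('e \<Rightarrow> 'e \<Rightarrow> 'e) \<Rightarrow> 'a set \<Rightarrow> ('a \<Rightarrow> 'a \<Rightarrow> 'a) \<Rightarrow> ('e \<Rightarrow> 'a) \<Rightarrow> bool" where
  "quandle_cover E opE Q opQ \<pi> \<longleftrightarrow>
     quandle E opE \<and> \<pi> ` E = Q \<and>
     (\<forall>u\<in>E. \<forall>v\<in>E. \<pi> (opE u v) = opQ (\<pi> u) (\<pi> v)) \<and>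
     (\<forall>u\<in>E. \<forall>v\<in>E. \<pi> u = \<pi> v \<longrightarrow> (\<forall>w\<in>E. opE u w = opE v w))"

definition connected_cover ::
  "'e set \<Rightarrow> ('e \<Rightarrow> 'e \<Rightarrow> 'e) \<Rightarrow> 'a set \<Rightarrow> ('a \<Rightarrow> 'a \<Rightarrow> 'a) \<Rightarrow> ('e \<Rightarrow> 'a) \<Rightarrow> bool" where
  "connected_cover E opE Q opQ \<pi> \<longleftrightarrow> quandle_cover E opE Q opQ \<pi> \<and> connected_quandle E opE"

definition rad :: "nat \<Rightarrow> nat" where
  "rad n = (\<Prod>p \<in> prime_factors n. p)"

end

theory Submission
  imports Defs
begin


lemma B_mult_apply:
  assumes "s \<in> carrier (BijGroup E)" "t \<in> carrier (BijGroup E)" "u \<in> E"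
  shows "(s \<otimes>\<^bsub>BijGroup E\<^esub> t) u = s (t u)"
  using assms by (simp add: BijGroup_def compose_def)

lemma B_one_apply: "u \<in> E \<Longrightarrow> \<one>\<^bsub>BijGroup E\<^esub> u = u"
  by (simp add: BijGroup_def)

lemma B_in_E: "s \<in> carrier (BijGroup E) \<Longrightarrow> u \<in> E \<Longrightarrow> s u \<in> E"
  by (auto simp: BijGroup_def Bij_def bij_betw_def)

lemma B_inv_apply1:
  assumes "s \<in> carrier (BijGroup E)" "u \<in> E"
  shows "s ((inv\<^bsub>BijGroup E\<^esub> s) u) = u"
proof -
  have b: "bij_betw s E E" using assms by (simp add: BijGroup_def Bij_def)
  have "inv\<^bsub>BijGroup E\<^esub> s = restrict (inv_into E s) E"
    using inv_BijGroup assms by (simp add: BijGroup_def)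
  then show ?thesis using assms b
    by (simp add: bij_betw_def f_inv_into_f)
qed

lemma B_inv_apply2:
  assumes "s \<in> carrier (BijGroup E)" "u \<in> E"
  shows "(inv\<^bsub>BijGroup E\<^esub> s) (s u) = u"
proof -
  have b: "bij_betw s E E" using assms by (simp add: BijGroup_def Bij_def)
  have "inv\<^bsub>BijGroup E\<^esub> s = restrict (inv_into E s) E"
    using inv_BijGroup assms by (simp add: BijGroup_def)
  then show ?thesis using assms b
    using B_in_E[OF assms] by (simp add: bij_betw_def inv_into_f_f)
qed

lemma B_eqI:
  assumes "s \<in> carrier (BijGroup E)" "t \<in> carrier (BijGroup E)" "\<And>u. u \<in> E \<Longrightarrow> s u = t u"
  shows "s = t"
  using assms by (auto simp: BijGroup_def Bij_def intro: extensionalityI)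



locale cov =
  fixes G :: "('a,'m) monoid_scheme" and f :: "'a \<Rightarrow> 'a" and E :: "'e set"
    and opE :: "'e \<Rightarrow> 'e \<Rightarrow> 'e" and pr :: "'e \<Rightarrow> 'a"
  assumes grp: "group G" and finG: "finite (carrier G)" and fiso: "f \<in> iso G G"
    and finE: "finite E" and cv: "quandle_cover E opE (carrier G) (QGf_op G f) pr"
    and cq: "connected_quandle E opE"
begin

sublocale G: group G by (rule grp)
sublocale B: group "BijGroup E" by (rule group_BijGroup)

lemma q: "quandle E opE" using cv unfolding quandle_cover_def by blast

lemma opE_bij: "a \<in> E \<Longrightarrow> bij_betw (opE a) E E"
  using q unfolding quandle_def by blast

lemma opE_closed: "a \<in> E \<Longrightarrow> b \<in> E \<Longrightarrow> opE a b \<in> E"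
  using opE_bij bij_betw_apply by fast

lemma selfdist: "a \<in> E \<Longrightarrow> b \<in> E \<Longrightarrow> c \<in> E \<Longrightarrow> opE a (opE b c) = opE (opE a b) (opE a c)"
  using q unfolding quandle_def by blast

lemma idem: "a \<in> E \<Longrightarrow> opE a a = a"
  using q unfolding quandle_def by blast

lemma pr_img: "pr ` E = carrier G"
  using cv unfolding quandle_cover_def by blast

lemma pr_E: "u \<in> E \<Longrightarrow> pr u \<in> carrier G"
  using pr_img by blast

lemma pr_surj: "x \<in> carrier G \<Longrightarrow> \<exists>u\<in>E. pr u = x"
  using pr_img by (metis imageE)

lemma pr_hom: "u \<in> E \<Longrightarrow> v \<in> E \<Longrightarrow> pr (opE u v) = QGf_op G f (pr u) (pr v)"
  using cv unfolding quandle_cover_def by blast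

lemma cover_eq: "u \<in> E \<Longrightarrow> v \<in> E \<Longrightarrow> pr u = pr v \<Longrightarrow> w \<in> E \<Longrightarrow> opE u w = opE v w"
  using cv unfolding quandle_cover_def by blast

lemma f_hom: "f \<in> hom G G"
  using fiso unfolding iso_def by blast

lemma f_closed: "x \<in> carrier G \<Longrightarrow> f x \<in> carrier G"
  using f_hom by (rule hom_in_carrier)

lemma f_mult: "x \<in> carrier G \<Longrightarrow> y \<in> carrier G \<Longrightarrow> f (x \<otimes>\<^bsub>G\<^esub> y) = f x \<otimes>\<^bsub>G\<^esub> f y"
  using f_hom by (rule hom_mult)

lemma f_inj: "inj_on f (carrier G)"
  using fiso unfolding iso_def bij_betw_def by blast

lemma Q_closed: "a \<in> carrier G \<Longrightarrow> x \<in> carrier G \<Longrightarrow> QGf_op G f a x \<in> carrier G"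
  by (simp add: QGf_op_def f_closed)

lemma Q_inj:
  assumes "a \<in> carrier G" "x \<in> carrier G" "y \<in> carrier G" "QGf_op G f a x = QGf_op G f a y"
  shows "x = y"
proof -
  have "f (inv\<^bsub>G\<^esub> a \<otimes>\<^bsub>G\<^esub> x) = f (inv\<^bsub>G\<^esub> a \<otimes>\<^bsub>G\<^esub> y)"
  proof -
    have "a \<otimes>\<^bsub>G\<^esub> f (inv\<^bsub>G\<^esub> a \<otimes>\<^bsub>G\<^esub> x) = a \<otimes>\<^bsub>G\<^esub> f (inv\<^bsub>G\<^esub> a \<otimes>\<^bsub>G\<^esub> y)"
      using assms(4) unfolding QGf_op_def .
    moreover have "f (inv\<^bsub>G\<^esub> a \<otimes>\<^bsub>G\<^esub> x) \<in> carrier G" "f (inv\<^bsub>G\<^esub> a \<otimes>\<^bsub>G\<^esub> y) \<in> carrier G"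
      using assms by (simp_all add: f_closed)
    ultimately show ?thesis using assms(1) G.l_cancel by blast
  qed
  then have "inv\<^bsub>G\<^esub> a \<otimes>\<^bsub>G\<^esub> x = inv\<^bsub>G\<^esub> a \<otimes>\<^bsub>G\<^esub> y"
    using inj_onD[OF f_inj] assms by simp
  then show ?thesis using assms G.inv_closed[OF assms(1)] by (metis G.l_cancel)
qed

definition Lt :: "'e \<Rightarrow> 'e \<Rightarrow> 'e" where "Lt a = (\<lambda>w\<in>E. opE a w)"

lemma Lt_B: "a \<in> E \<Longrightarrow> Lt a \<in> carrier (BijGroup E)"
proof -
  assume a: "a \<in> E"
  have "bij_betw (\<lambda>w\<in>E. opE a w) E E"
    using opE_bij[OF a] by (rule bij_betw_cong[THEN iffD1, rotated]) simp
  then show ?thesis by (simp add: Lt_def BijGroup_def Bij_def)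
qed

lemma Lt_apply: "w \<in> E \<Longrightarrow> Lt a w = opE a w"
  by (simp add: Lt_def)

lemma LT_eq: "left_translations E opE = Lt ` E"
  by (auto simp: left_translations_def Lt_def)

definition aut :: "('e \<Rightarrow> 'e) \<Rightarrow> bool" where
  "aut s \<longleftrightarrow> (\<forall>u\<in>E. \<forall>v\<in>E. s (opE u v) = opE (s u) (s v))"

definition fib :: "('e \<Rightarrow> 'e) \<Rightarrow> bool" where
  "fib s \<longleftrightarrow> (\<forall>u\<in>E. \<forall>v\<in>E. (pr (s u) = pr (s v)) = (pr u = pr v))"

definition S0 where "S0 = {s \<in> carrier (BijGroup E). aut s \<and> fib s}"

lemma S0_sub: "subgroup S0 (BijGroup E)"
proof (rule subgroup.intro)
  show "S0 \<subseteq> carrier (BijGroup E)" by (auto simp: S0_def)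
next
  fix x y assume x: "x \<in> S0" and y: "y \<in> S0"
  have xB: "x \<in> carrier (BijGroup E)" and yB: "y \<in> carrier (BijGroup E)" using x y by (auto simp: S0_def)
  have ax: "aut x" and fx: "fib x" and ay: "aut y" and fy: "fib y" using x y by (auto simp: S0_def)
  have "aut (x \<otimes>\<^bsub>BijGroup E\<^esub> y)" unfolding aut_def
  proof (intro ballI)
    fix u v assume u: "u \<in> E" and v: "v \<in> E"
    have yu: "y u \<in> E" "y v \<in> E" using yB u v by (simp_all add: B_in_E)
    have "(x \<otimes>\<^bsub>BijGroup E\<^esub> y) (opE u v) = x (y (opE u v))"
      using xB yB u v opE_closed by (simp add: B_mult_apply)
    also have "\<dots> = x (opE (y u) (y v))" using ay u v unfolding aut_def by simp
    also have "\<dots> = opE (x (y u)) (x (y v))" using ax yu unfolding aut_def by simp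
    finally show "(x \<otimes>\<^bsub>BijGroup E\<^esub> y) (opE u v) =
      opE ((x \<otimes>\<^bsub>BijGroup E\<^esub> y) u) ((x \<otimes>\<^bsub>BijGroup E\<^esub> y) v)"
      using xB yB u v by (simp add: B_mult_apply)
  qed
  moreover have "fib (x \<otimes>\<^bsub>BijGroup E\<^esub> y)" unfolding fib_def
  proof (intro ballI)
    fix u v assume u: "u \<in> E" and v: "v \<in> E"
    have yu: "y u \<in> E" "y v \<in> E" using yB u v by (simp_all add: B_in_E)
    have "(pr (x (y u)) = pr (x (y v))) = (pr (y u) = pr (y v))" using fx yu unfolding fib_def by blast
    also have "\<dots> = (pr u = pr v)" using fy u v unfolding fib_def by blast
    finally show "(pr ((x \<otimes>\<^bsub>BijGroup E\<^esub> y) u) = pr ((x \<otimes>\<^bsub>BijGroup E\<^esub> y) v)) = (pr u = pr v)"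
      using xB yB u v by (simp add: B_mult_apply)
  qed
  moreover have "x \<otimes>\<^bsub>BijGroup E\<^esub> y \<in> carrier (BijGroup E)" using xB yB by simp
  ultimately show "x \<otimes>\<^bsub>BijGroup E\<^esub> y \<in> S0" by (simp add: S0_def)
next
  have "aut (\<one>\<^bsub>BijGroup E\<^esub>)" unfolding aut_def using opE_closed by (simp add: B_one_apply)
  moreover have "fib (\<one>\<^bsub>BijGroup E\<^esub>)" unfolding fib_def by (simp add: B_one_apply)
  ultimately show "\<one>\<^bsub>BijGroup E\<^esub> \<in> S0" by (simp add: S0_def)
next
  fix x assume x: "x \<in> S0"
  have xB: "x \<in> carrier (BijGroup E)" using x by (auto simp: S0_def)
  have ax: "aut x" and fx: "fib x" using x by (auto simp: S0_def)
  let ?i = "inv\<^bsub>BijGroup E\<^esub> x"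
  have iB: "?i \<in> carrier (BijGroup E)" using xB by simp
  have "aut ?i" unfolding aut_def
  proof (intro ballI)
    fix u v assume u: "u \<in> E" and v: "v \<in> E"
    have iu: "?i u \<in> E" "?i v \<in> E" using iB u v by (simp_all add: B_in_E)
    have "x (opE (?i u) (?i v)) = opE (x (?i u)) (x (?i v))"
      using ax iu unfolding aut_def by blast
    also have "\<dots> = opE u v" using xB u v by (simp add: B_inv_apply1)
    finally have "?i (x (opE (?i u) (?i v))) = ?i (opE u v)" by simp
    moreover have "?i (x (opE (?i u) (?i v))) = opE (?i u) (?i v)"
      using xB iu opE_closed by (simp add: B_inv_apply2)
    ultimately show "?i (opE u v) = opE (?i u) (?i v)" by simp
  qed
  moreover have "fib ?i" unfolding fib_def
  proof (intro ballI)
    fix u v assume u: "u \<in> E" and v: "v \<in> E"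
    have iu: "?i u \<in> E" "?i v \<in> E" using iB u v by (simp_all add: B_in_E)
    have "(pr (x (?i u)) = pr (x (?i v))) = (pr (?i u) = pr (?i v))"
      using fx iu unfolding fib_def by blast
    then show "(pr (?i u) = pr (?i v)) = (pr u = pr v)"
      using xB u v by (simp add: B_inv_apply1)
  qed
  ultimately show "?i \<in> S0" using iB by (simp add: S0_def)
qed

definition Inn where "Inn = generate (BijGroup E) (Lt ` E)"

lemma LtE_B: "Lt ` E \<subseteq> carrier (BijGroup E)"
  using Lt_B by blast

lemma Inn_sub: "subgroup Inn (BijGroup E)"
  unfolding Inn_def using LtE_B by (rule B.generate_is_subgroup)

lemma Lt_S0: "a \<in> E \<Longrightarrow> Lt a \<in> S0"
proof -
  assume a: "a \<in> E"
  have "aut (Lt a)" unfolding aut_def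
  proof (intro ballI)
    fix u v assume u: "u \<in> E" and v: "v \<in> E"
    show "Lt a (opE u v) = opE (Lt a u) (Lt a v)"
      using a u v opE_closed selfdist[OF a u v] by (simp add: Lt_apply)
  qed
  moreover have "fib (Lt a)" unfolding fib_def
  proof (intro ballI)
    fix u v assume u: "u \<in> E" and v: "v \<in> E"
    have e: "pr (Lt a u) = QGf_op G f (pr a) (pr u)" "pr (Lt a v) = QGf_op G f (pr a) (pr v)"
      using a u v by (simp_all add: Lt_apply pr_hom)
    show "(pr (Lt a u) = pr (Lt a v)) = (pr u = pr v)"
      unfolding e using Q_inj[OF pr_E[OF a] pr_E[OF u] pr_E[OF v]] by auto
  qed
  ultimately show ?thesis using Lt_B[OF a] by (simp add: S0_def)
qed

lemma Inn_S0: "Inn \<subseteq> S0"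
  unfolding Inn_def
proof (rule B.generate_subgroup_incl)
  show "Lt ` E \<subseteq> S0" using Lt_S0 by blast
  show "subgroup S0 (BijGroup E)" by (rule S0_sub)
qed

lemma Inn_B: "s \<in> Inn \<Longrightarrow> s \<in> carrier (BijGroup E)"
  using Inn_S0 unfolding S0_def by blast

lemma Inn_aut: "s \<in> Inn \<Longrightarrow> u \<in> E \<Longrightarrow> v \<in> E \<Longrightarrow> s (opE u v) = opE (s u) (s v)"
  using Inn_S0 unfolding S0_def aut_def by blast

lemma Inn_fib: "s \<in> Inn \<Longrightarrow> u \<in> E \<Longrightarrow> v \<in> E \<Longrightarrow> (pr (s u) = pr (s v)) = (pr u = pr v)"
  using Inn_S0 unfolding S0_def fib_def by blast

lemma Inn_trans: "a \<in> E \<Longrightarrow> b \<in> E \<Longrightarrow> \<exists>s\<in>Inn. s a = b"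
proof -
  assume a: "a \<in> E" and b: "b \<in> E"
  have "\<forall>a\<in>E. \<forall>b\<in>E. \<exists>\<sigma> \<in> generate (BijGroup E) (left_translations E opE). \<sigma> a = b"
    using cq unfolding connected_quandle_def by (rule conjunct2)
  then show ?thesis using a b unfolding LT_eq Inn_def by blast
qed

end


context cov
begin

definition DG where
  "DG = {Lt a \<otimes>\<^bsub>BijGroup E\<^esub> inv\<^bsub>BijGroup E\<^esub> (Lt b) | a b. a \<in> E \<and> b \<in> E}"

definition Dis where "Dis = generate (BijGroup E) DG"

lemma DG_B: "DG \<subseteq> carrier (BijGroup E)"
  unfolding DG_def using Lt_B by blast

lemma DG_I: "a \<in> E \<Longrightarrow> b \<in> E \<Longrightarrow> Lt a \<otimes>\<^bsub>BijGroup E\<^esub> inv\<^bsub>BijGroup E\<^esub> (Lt b) \<in> DG"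
  unfolding DG_def by blast

lemma DG_Dis: "a \<in> E \<Longrightarrow> b \<in> E \<Longrightarrow> Lt a \<otimes>\<^bsub>BijGroup E\<^esub> inv\<^bsub>BijGroup E\<^esub> (Lt b) \<in> Dis"
  unfolding Dis_def by (rule generate.incl) (rule DG_I)

lemma Dis_sub: "subgroup Dis (BijGroup E)"
  unfolding Dis_def using DG_B by (rule B.generate_is_subgroup)

lemma Lt_Inn: "a \<in> E \<Longrightarrow> Lt a \<in> Inn"
  unfolding Inn_def by (rule generate.incl) blast

lemma DG_Inn: "DG \<subseteq> Inn"
proof
  fix d assume "d \<in> DG"
  then obtain a b where ab: "a \<in> E" "b \<in> E" "d = Lt a \<otimes>\<^bsub>BijGroup E\<^esub> inv\<^bsub>BijGroup E\<^esub> (Lt b)"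
    unfolding DG_def by blast
  have "inv\<^bsub>BijGroup E\<^esub> (Lt b) \<in> Inn"
    using subgroup.m_inv_closed[OF Inn_sub Lt_Inn[OF ab(2)]] .
  then show "d \<in> Inn" using ab subgroup.m_closed[OF Inn_sub Lt_Inn[OF ab(1)]] by simp
qed

lemma Dis_Inn: "Dis \<subseteq> Inn"
  unfolding Dis_def using DG_Inn Inn_sub by (rule B.generate_subgroup_incl)

lemma Dis_B: "d \<in> Dis \<Longrightarrow> d \<in> carrier (BijGroup E)"
  using Dis_Inn Inn_B by blast

lemma Lt_fix: "a \<in> E \<Longrightarrow> Lt a a = a"
  by (simp add: Lt_apply idem)

lemma inv_Lt_fix: "a \<in> E \<Longrightarrow> (inv\<^bsub>BijGroup E\<^esub> (Lt a)) a = a"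
  using B_inv_apply2[OF Lt_B, of a a] Lt_fix by simp

lemma Dis_orbit:
  assumes "s \<in> Inn" "a \<in> E" shows "\<exists>d\<in>Dis. d a = s a"
  using assms(1)[unfolded Inn_def] assms(2)
proof (induction s arbitrary: a rule: generate.induct)
  case one
  have "\<one>\<^bsub>BijGroup E\<^esub> \<in> Dis" unfolding Dis_def by (rule generate.one)
  then show ?case by blast
next
  case (incl h)
  then obtain c where c: "c \<in> E" "h = Lt c" by blast
  let ?d = "Lt c \<otimes>\<^bsub>BijGroup E\<^esub> inv\<^bsub>BijGroup E\<^esub> (Lt a)"
  have "?d \<in> Dis" using c incl.prems by (simp add: DG_Dis)
  moreover have "?d a = h a"
    using c incl.prems Lt_B by (simp add: B_mult_apply inv_Lt_fix)
  ultimately show ?case by blast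
next
  case (inv h)
  then obtain c where c: "c \<in> E" "h = Lt c" by blast
  let ?w = "(inv\<^bsub>BijGroup E\<^esub> (Lt c)) a"
  have w: "?w \<in> E" using B_in_E[OF B.inv_closed[OF Lt_B[OF c(1)]] inv.prems] .
  let ?d = "Lt ?w \<otimes>\<^bsub>BijGroup E\<^esub> inv\<^bsub>BijGroup E\<^esub> (Lt c)"
  have "?d \<in> Dis" using c w by (simp add: DG_Dis)
  moreover have "?d a = ?w"
    using c inv.prems Lt_B w by (simp add: B_mult_apply Lt_fix)
  ultimately show ?case using c by blast
next
  case (eng h1 h2)
  have h1B: "h1 \<in> carrier (BijGroup E)" and h2B: "h2 \<in> carrier (BijGroup E)"
    using B.generate_in_carrier[OF LtE_B eng.hyps(1)] B.generate_in_carrier[OF LtE_B eng.hyps(2)] by simp_all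
  obtain d2 where d2: "d2 \<in> Dis" "d2 a = h2 a" using eng.IH(2)[OF eng.prems] by blast
  have "h2 a \<in> E" using B_in_E[OF h2B eng.prems] .
  then obtain d1 where d1: "d1 \<in> Dis" "d1 (h2 a) = h1 (h2 a)" using eng.IH(1) by blast
  have "d1 \<otimes>\<^bsub>BijGroup E\<^esub> d2 \<in> Dis" using subgroup.m_closed[OF Dis_sub d1(1) d2(1)] .
  moreover have "(d1 \<otimes>\<^bsub>BijGroup E\<^esub> d2) a = (h1 \<otimes>\<^bsub>BijGroup E\<^esub> h2) a"
  proof -
    have "(d1 \<otimes>\<^bsub>BijGroup E\<^esub> d2) a = d1 (d2 a)" using B_mult_apply[OF Dis_B[OF d1(1)] Dis_B[OF d2(1)] eng.prems] .
    also have "\<dots> = h1 (h2 a)" using d1 d2 by simp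
    also have "\<dots> = (h1 \<otimes>\<^bsub>BijGroup E\<^esub> h2) a" using B_mult_apply[OF h1B h2B eng.prems] by simp
    finally show ?thesis .
  qed
  ultimately show ?case by blast
qed

lemma Dis_trans: "a \<in> E \<Longrightarrow> b \<in> E \<Longrightarrow> \<exists>d\<in>Dis. d a = b"
proof -
  assume a: "a \<in> E" and b: "b \<in> E"
  obtain s where s: "s \<in> Inn" "s a = b" using Inn_trans[OF a b] by blast
  obtain d where "d \<in> Dis" "d a = s a" using Dis_orbit[OF s(1) a] by blast
  then show ?thesis using s by auto
qed

lemma G_c1: "x \<in> carrier G \<Longrightarrow> y \<in> carrier G \<Longrightarrow> x \<otimes>\<^bsub>G\<^esub> (inv\<^bsub>G\<^esub> x \<otimes>\<^bsub>G\<^esub> y) = y"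
  by (simp add: G.m_assoc[symmetric])

lemma G_c2: "x \<in> carrier G \<Longrightarrow> y \<in> carrier G \<Longrightarrow> inv\<^bsub>G\<^esub> x \<otimes>\<^bsub>G\<^esub> (x \<otimes>\<^bsub>G\<^esub> y) = y"
  by (simp add: G.m_assoc[symmetric])

lemma transl_alg:
  assumes a: "a \<in> carrier G" and b: "b \<in> carrier G" and w: "w \<in> carrier G"
  shows "a \<otimes>\<^bsub>G\<^esub> f (inv\<^bsub>G\<^esub> a \<otimes>\<^bsub>G\<^esub> w) =
    (a \<otimes>\<^bsub>G\<^esub> f (inv\<^bsub>G\<^esub> a \<otimes>\<^bsub>G\<^esub> b) \<otimes>\<^bsub>G\<^esub> inv\<^bsub>G\<^esub> b) \<otimes>\<^bsub>G\<^esub> (b \<otimes>\<^bsub>G\<^esub> f (inv\<^bsub>G\<^esub> b \<otimes>\<^bsub>G\<^esub> w))"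
proof -
  let ?F1 = "f (inv\<^bsub>G\<^esub> a \<otimes>\<^bsub>G\<^esub> b)" and ?F2 = "f (inv\<^bsub>G\<^esub> b \<otimes>\<^bsub>G\<^esub> w)"
  have F: "?F1 \<in> carrier G" "?F2 \<in> carrier G" using a b w by (simp_all add: f_closed)
  have e1: "(inv\<^bsub>G\<^esub> a \<otimes>\<^bsub>G\<^esub> b) \<otimes>\<^bsub>G\<^esub> (inv\<^bsub>G\<^esub> b \<otimes>\<^bsub>G\<^esub> w) = inv\<^bsub>G\<^esub> a \<otimes>\<^bsub>G\<^esub> w"
    using a b w by (simp add: G.m_assoc G_c1)
  have e2: "?F1 \<otimes>\<^bsub>G\<^esub> ?F2 = f (inv\<^bsub>G\<^esub> a \<otimes>\<^bsub>G\<^esub> w)"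
    using a b w by (simp add: f_mult[symmetric] e1)
  have "(a \<otimes>\<^bsub>G\<^esub> ?F1 \<otimes>\<^bsub>G\<^esub> inv\<^bsub>G\<^esub> b) \<otimes>\<^bsub>G\<^esub> (b \<otimes>\<^bsub>G\<^esub> ?F2)
      = a \<otimes>\<^bsub>G\<^esub> (?F1 \<otimes>\<^bsub>G\<^esub> (inv\<^bsub>G\<^esub> b \<otimes>\<^bsub>G\<^esub> (b \<otimes>\<^bsub>G\<^esub> ?F2)))"
    using a b F by (simp add: G.m_assoc)
  also have "\<dots> = a \<otimes>\<^bsub>G\<^esub> (?F1 \<otimes>\<^bsub>G\<^esub> ?F2)" using b F by (simp add: G_c2)
  also have "\<dots> = a \<otimes>\<^bsub>G\<^esub> f (inv\<^bsub>G\<^esub> a \<otimes>\<^bsub>G\<^esub> w)" using e2 by simp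
  finally show ?thesis by simp
qed

lemma DG_transl:
  assumes a: "a \<in> E" and b: "b \<in> E"
  shows "\<exists>g\<in>carrier G. \<forall>u\<in>E. pr ((Lt a \<otimes>\<^bsub>BijGroup E\<^esub> inv\<^bsub>BijGroup E\<^esub> (Lt b)) u) = g \<otimes>\<^bsub>G\<^esub> pr u"
proof -
  let ?a = "pr a" and ?b = "pr b"
  let ?g = "?a \<otimes>\<^bsub>G\<^esub> f (inv\<^bsub>G\<^esub> ?a \<otimes>\<^bsub>G\<^esub> ?b) \<otimes>\<^bsub>G\<^esub> inv\<^bsub>G\<^esub> ?b"
  have ab: "?a \<in> carrier G" "?b \<in> carrier G" using a b by (simp_all add: pr_E)
  have g: "?g \<in> carrier G" using ab by (simp add: f_closed)
  have "\<forall>u\<in>E. pr ((Lt a \<otimes>\<^bsub>BijGroup E\<^esub> inv\<^bsub>BijGroup E\<^esub> (Lt b)) u) = ?g \<otimes>\<^bsub>G\<^esub> pr u"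
  proof
    fix u assume u: "u \<in> E"
    let ?w = "(inv\<^bsub>BijGroup E\<^esub> (Lt b)) u"
    have LbB: "Lt b \<in> carrier (BijGroup E)" using Lt_B[OF b] .
    have w: "?w \<in> E" using B_in_E[OF B.inv_closed[OF LbB] u] .
    have "Lt b ?w = u" using B_inv_apply1[OF LbB u] .
    then have "opE b ?w = u" using w by (simp add: Lt_apply)
    then have pu: "pr u = QGf_op G f ?b (pr ?w)" using pr_hom[OF b w] by simp
    have "(Lt a \<otimes>\<^bsub>BijGroup E\<^esub> inv\<^bsub>BijGroup E\<^esub> (Lt b)) u = opE a ?w"
      using B_mult_apply[OF Lt_B[OF a] B.inv_closed[OF LbB] u] w by (simp add: Lt_apply)
    then have "pr ((Lt a \<otimes>\<^bsub>BijGroup E\<^esub> inv\<^bsub>BijGroup E\<^esub> (Lt b)) u) = QGf_op G f ?a (pr ?w)"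
      using pr_hom[OF a w] by simp
    also have "\<dots> = ?g \<otimes>\<^bsub>G\<^esub> pr u"
      unfolding pu QGf_op_def using transl_alg[OF ab pr_E[OF w]] .
    finally show "pr ((Lt a \<otimes>\<^bsub>BijGroup E\<^esub> inv\<^bsub>BijGroup E\<^esub> (Lt b)) u) = ?g \<otimes>\<^bsub>G\<^esub> pr u" .
  qed
  then show ?thesis using g by blast
qed

lemma DG_transl':
  assumes "h \<in> DG" shows "\<exists>g\<in>carrier G. \<forall>u\<in>E. pr (h u) = g \<otimes>\<^bsub>G\<^esub> pr u"
proof -
  obtain a b where "a \<in> E" "b \<in> E" "h = Lt a \<otimes>\<^bsub>BijGroup E\<^esub> inv\<^bsub>BijGroup E\<^esub> (Lt b)"
    using assms unfolding DG_def by blast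
  then show ?thesis using DG_transl by simp
qed

lemma Dis_transl:
  assumes "d \<in> Dis" shows "\<exists>g\<in>carrier G. \<forall>u\<in>E. pr (d u) = g \<otimes>\<^bsub>G\<^esub> pr u"
  using assms[unfolded Dis_def]
proof (induction d rule: generate.induct)
  case one
  have "\<forall>u\<in>E. pr (\<one>\<^bsub>BijGroup E\<^esub> u) = \<one>\<^bsub>G\<^esub> \<otimes>\<^bsub>G\<^esub> pr u"
    by (simp add: B_one_apply pr_E)
  then show ?case by blast
next
  case (incl h)
  then show ?case by (rule DG_transl')
next
  case (inv h)
  obtain g where g: "g \<in> carrier G" "\<forall>u\<in>E. pr (h u) = g \<otimes>\<^bsub>G\<^esub> pr u"
    using DG_transl'[OF inv.hyps] by blast
  have hB: "h \<in> carrier (BijGroup E)" using inv.hyps DG_B by blast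
  have "\<forall>u\<in>E. pr ((inv\<^bsub>BijGroup E\<^esub> h) u) = inv\<^bsub>G\<^esub> g \<otimes>\<^bsub>G\<^esub> pr u"
  proof
    fix u assume u: "u \<in> E"
    let ?w = "(inv\<^bsub>BijGroup E\<^esub> h) u"
    have w: "?w \<in> E" using B_in_E[OF B.inv_closed[OF hB] u] .
    have "pr u = g \<otimes>\<^bsub>G\<^esub> pr ?w" using g(2) w B_inv_apply1[OF hB u] by metis
    then show "pr ?w = inv\<^bsub>G\<^esub> g \<otimes>\<^bsub>G\<^esub> pr u" using G_c2[OF g(1) pr_E[OF w]] by simp
  qed
  then show ?case using g(1) by blast
next
  case (eng h1 h2)
  obtain g1 where g1: "g1 \<in> carrier G" "\<forall>u\<in>E. pr (h1 u) = g1 \<otimes>\<^bsub>G\<^esub> pr u" using eng.IH(1) by blast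
  obtain g2 where g2: "g2 \<in> carrier G" "\<forall>u\<in>E. pr (h2 u) = g2 \<otimes>\<^bsub>G\<^esub> pr u" using eng.IH(2) by blast
  have h1B: "h1 \<in> carrier (BijGroup E)" using B.generate_in_carrier[OF DG_B eng.hyps(1)] .
  have h2B: "h2 \<in> carrier (BijGroup E)" using B.generate_in_carrier[OF DG_B eng.hyps(2)] .
  have "\<forall>u\<in>E. pr ((h1 \<otimes>\<^bsub>BijGroup E\<^esub> h2) u) = (g1 \<otimes>\<^bsub>G\<^esub> g2) \<otimes>\<^bsub>G\<^esub> pr u"
  proof
    fix u assume u: "u \<in> E"
    have h2u: "h2 u \<in> E" using B_in_E[OF h2B u] .
    have "pr ((h1 \<otimes>\<^bsub>BijGroup E\<^esub> h2) u) = pr (h1 (h2 u))" using B_mult_apply[OF h1B h2B u] by simp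
    also have "\<dots> = g1 \<otimes>\<^bsub>G\<^esub> (g2 \<otimes>\<^bsub>G\<^esub> pr u)" using g1(2) g2(2) h2u u by simp
    also have "\<dots> = (g1 \<otimes>\<^bsub>G\<^esub> g2) \<otimes>\<^bsub>G\<^esub> pr u" using g1(1) g2(1) pr_E[OF u] by (simp add: G.m_assoc)
    finally show "pr ((h1 \<otimes>\<^bsub>BijGroup E\<^esub> h2) u) = (g1 \<otimes>\<^bsub>G\<^esub> g2) \<otimes>\<^bsub>G\<^esub> pr u" .
  qed
  then show ?case using g1(1) g2(1) by blast
qed

end


context cov
begin

definition K where "K = {d \<in> Dis. \<forall>u\<in>E. pr (d u) = pr u}"

lemma K_Dis: "k \<in> K \<Longrightarrow> k \<in> Dis" unfolding K_def by blast
lemma K_Inn: "k \<in> K \<Longrightarrow> k \<in> Inn" using K_Dis Dis_Inn by blast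
lemma K_B: "k \<in> K \<Longrightarrow> k \<in> carrier (BijGroup E)" using K_Dis Dis_B by blast
lemma K_pr: "k \<in> K \<Longrightarrow> u \<in> E \<Longrightarrow> pr (k u) = pr u" unfolding K_def by blast

lemma K_sub: "subgroup K (BijGroup E)"
proof (rule subgroup.intro)
  show "K \<subseteq> carrier (BijGroup E)" using K_B by blast
next
  fix x y assume x: "x \<in> K" and y: "y \<in> K"
  have "x \<otimes>\<^bsub>BijGroup E\<^esub> y \<in> Dis" using subgroup.m_closed[OF Dis_sub K_Dis[OF x] K_Dis[OF y]] .
  moreover have "\<forall>u\<in>E. pr ((x \<otimes>\<^bsub>BijGroup E\<^esub> y) u) = pr u"
  proof
    fix u assume u: "u \<in> E"
    have "pr ((x \<otimes>\<^bsub>BijGroup E\<^esub> y) u) = pr (x (y u))" using B_mult_apply[OF K_B[OF x] K_B[OF y] u] by simp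
    also have "\<dots> = pr u" using K_pr[OF x B_in_E[OF K_B[OF y] u]] K_pr[OF y u] by simp
    finally show "pr ((x \<otimes>\<^bsub>BijGroup E\<^esub> y) u) = pr u" .
  qed
  ultimately show "x \<otimes>\<^bsub>BijGroup E\<^esub> y \<in> K" unfolding K_def by blast
next
  have "\<one>\<^bsub>BijGroup E\<^esub> \<in> Dis" unfolding Dis_def by (rule generate.one)
  moreover have "\<forall>u\<in>E. pr (\<one>\<^bsub>BijGroup E\<^esub> u) = pr u" by (simp add: B_one_apply)
  ultimately show "\<one>\<^bsub>BijGroup E\<^esub> \<in> K" unfolding K_def by blast
next
  fix x assume x: "x \<in> K"
  have "inv\<^bsub>BijGroup E\<^esub> x \<in> Dis" using subgroup.m_inv_closed[OF Dis_sub K_Dis[OF x]] .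
  moreover have "\<forall>u\<in>E. pr ((inv\<^bsub>BijGroup E\<^esub> x) u) = pr u"
  proof
    fix u assume u: "u \<in> E"
    have w: "(inv\<^bsub>BijGroup E\<^esub> x) u \<in> E" using B_in_E[OF B.inv_closed[OF K_B[OF x]] u] .
    have "pr (x ((inv\<^bsub>BijGroup E\<^esub> x) u)) = pr ((inv\<^bsub>BijGroup E\<^esub> x) u)" using K_pr[OF x w] .
    then show "pr ((inv\<^bsub>BijGroup E\<^esub> x) u) = pr u" using B_inv_apply1[OF K_B[OF x] u] by simp
  qed
  ultimately show "inv\<^bsub>BijGroup E\<^esub> x \<in> K" unfolding K_def by blast
qed

lemma K_Lt_comm:
  assumes k: "k \<in> K" and c: "c \<in> E" and u: "u \<in> E"
  shows "k (Lt c u) = Lt c (k u)"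
proof -
  have ku: "k u \<in> E" using B_in_E[OF K_B[OF k] u] .
  have kc: "k c \<in> E" using B_in_E[OF K_B[OF k] c] .
  have "k (Lt c u) = k (opE c u)" using u by (simp add: Lt_apply)
  also have "\<dots> = opE (k c) (k u)" using Inn_aut[OF K_Inn[OF k] c u] .
  also have "\<dots> = opE c (k u)" using cover_eq[OF kc c K_pr[OF k c] ku] .
  also have "\<dots> = Lt c (k u)" using ku by (simp add: Lt_apply)
  finally show ?thesis .
qed

lemma K_central_pt:
  assumes k: "k \<in> K" and s: "s \<in> Inn" and u: "u \<in> E"
  shows "k (s u) = s (k u)"
  using s[unfolded Inn_def] u
proof (induction s arbitrary: u rule: generate.induct)
  case one
  have "k u \<in> E" using B_in_E[OF K_B[OF k] one.prems] .
  then show ?case using one.prems by (simp add: B_one_apply)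
next
  case (incl h)
  then obtain c where c: "c \<in> E" "h = Lt c" by blast
  then show ?case using K_Lt_comm[OF k c(1) incl.prems] by simp
next
  case (inv h)
  then obtain c where c: "c \<in> E" "h = Lt c" by blast
  have LcB: "Lt c \<in> carrier (BijGroup E)" using Lt_B[OF c(1)] .
  let ?w = "(inv\<^bsub>BijGroup E\<^esub> (Lt c)) u"
  have w: "?w \<in> E" using B_in_E[OF B.inv_closed[OF LcB] inv.prems] .
  have kw: "k ?w \<in> E" using B_in_E[OF K_B[OF k] w] .
  have "Lt c (k ?w) = k (Lt c ?w)" using K_Lt_comm[OF k c(1) w] by simp
  also have "\<dots> = k u" using B_inv_apply1[OF LcB inv.prems] by simp
  finally have "(inv\<^bsub>BijGroup E\<^esub> (Lt c)) (Lt c (k ?w)) = (inv\<^bsub>BijGroup E\<^esub> (Lt c)) (k u)" by simp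
  then have "k ?w = (inv\<^bsub>BijGroup E\<^esub> (Lt c)) (k u)" using B_inv_apply2[OF LcB kw] by simp
  then show ?case using c by simp
next
  case (eng h1 h2)
  have h1B: "h1 \<in> carrier (BijGroup E)" using B.generate_in_carrier[OF LtE_B eng.hyps(1)] .
  have h2B: "h2 \<in> carrier (BijGroup E)" using B.generate_in_carrier[OF LtE_B eng.hyps(2)] .
  have h2u: "h2 u \<in> E" using B_in_E[OF h2B eng.prems] .
  have ku: "k u \<in> E" using B_in_E[OF K_B[OF k] eng.prems] .
  have "k ((h1 \<otimes>\<^bsub>BijGroup E\<^esub> h2) u) = k (h1 (h2 u))" using B_mult_apply[OF h1B h2B eng.prems] by simp
  also have "\<dots> = h1 (k (h2 u))" using eng.IH(1)[OF h2u] .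
  also have "\<dots> = h1 (h2 (k u))" using eng.IH(2)[OF eng.prems] by simp
  also have "\<dots> = (h1 \<otimes>\<^bsub>BijGroup E\<^esub> h2) (k u)" using B_mult_apply[OF h1B h2B ku] by simp
  finally show ?case .
qed

lemma K_central:
  assumes k: "k \<in> K" and s: "s \<in> Inn"
  shows "k \<otimes>\<^bsub>BijGroup E\<^esub> s = s \<otimes>\<^bsub>BijGroup E\<^esub> k"
proof (rule B_eqI)
  show "k \<otimes>\<^bsub>BijGroup E\<^esub> s \<in> carrier (BijGroup E)" using K_B[OF k] Inn_B[OF s] by simp
  show "s \<otimes>\<^bsub>BijGroup E\<^esub> k \<in> carrier (BijGroup E)" using K_B[OF k] Inn_B[OF s] by simp
  fix u assume u: "u \<in> E"
  show "(k \<otimes>\<^bsub>BijGroup E\<^esub> s) u = (s \<otimes>\<^bsub>BijGroup E\<^esub> k) u"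
    using B_mult_apply[OF K_B[OF k] Inn_B[OF s] u] B_mult_apply[OF Inn_B[OF s] K_B[OF k] u]
      K_central_pt[OF k s u] by simp
qed

lemma K_semireg:
  assumes k: "k \<in> K" and u: "u \<in> E" and ku: "k u = u"
  shows "k = \<one>\<^bsub>BijGroup E\<^esub>"
proof (rule B_eqI)
  show "k \<in> carrier (BijGroup E)" using K_B[OF k] .
  show "\<one>\<^bsub>BijGroup E\<^esub> \<in> carrier (BijGroup E)" by simp
  fix v assume v: "v \<in> E"
  obtain s where s: "s \<in> Inn" "s u = v" using Inn_trans[OF u v] by blast
  have "k v = s (k u)" using K_central_pt[OF k s(1) u] s(2) by simp
  then show "k v = \<one>\<^bsub>BijGroup E\<^esub> v" using ku s(2) B_one_apply[OF v] by simp
qed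

lemma K_eq:
  assumes k1: "k1 \<in> K" and k2: "k2 \<in> K" and u: "u \<in> E" and e: "k1 u = k2 u"
  shows "k1 = k2"
proof -
  have B1: "k1 \<in> carrier (BijGroup E)" and B2: "k2 \<in> carrier (BijGroup E)" using K_B k1 k2 by blast+
  let ?k = "inv\<^bsub>BijGroup E\<^esub> k2 \<otimes>\<^bsub>BijGroup E\<^esub> k1"
  have kK: "?k \<in> K" using subgroup.m_closed[OF K_sub subgroup.m_inv_closed[OF K_sub k2] k1] .
  have "?k u = (inv\<^bsub>BijGroup E\<^esub> k2) (k2 u)" using B_mult_apply[OF B.inv_closed[OF B2] B1 u] e by simp
  also have "\<dots> = u" using B_inv_apply2[OF B2 u] .
  finally have "?k = \<one>\<^bsub>BijGroup E\<^esub>" using K_semireg[OF kK u] by simp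
  then have "k2 \<otimes>\<^bsub>BijGroup E\<^esub> ?k = k2" using B2 by simp
  then show ?thesis using B1 B2 by (simp add: B.m_assoc[symmetric])
qed

lemma K_fiber_trans:
  assumes u: "u \<in> E" and v: "v \<in> E" and p: "pr u = pr v"
  shows "\<exists>k\<in>K. k u = v"
proof -
  obtain d where d: "d \<in> Dis" "d u = v" using Dis_trans[OF u v] by blast
  obtain g where g: "g \<in> carrier G" "\<forall>w\<in>E. pr (d w) = g \<otimes>\<^bsub>G\<^esub> pr w" using Dis_transl[OF d(1)] by blast
  have "g \<otimes>\<^bsub>G\<^esub> pr u = pr (d u)" using g(2) u by simp
  also have "\<dots> = \<one>\<^bsub>G\<^esub> \<otimes>\<^bsub>G\<^esub> pr u" using d(2) p pr_E[OF u] by simp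
  finally have "g \<otimes>\<^bsub>G\<^esub> pr u = \<one>\<^bsub>G\<^esub> \<otimes>\<^bsub>G\<^esub> pr u" .
  then have g1: "g = \<one>\<^bsub>G\<^esub>" using G.right_cancel[OF pr_E[OF u] g(1) G.one_closed] by simp
  have "\<forall>w\<in>E. pr (d w) = pr w" using g(2) g1 pr_E by simp
  then have "d \<in> K" using d(1) unfolding K_def by blast
  then show ?thesis using d(2) by blast
qed

end


context cov
begin

definition KG where "KG = (BijGroup E)\<lparr>carrier := K\<rparr>"

lemma KG_carrier [simp]: "carrier KG = K" by (simp add: KG_def)
lemma KG_mult [simp]: "x \<otimes>\<^bsub>KG\<^esub> y = x \<otimes>\<^bsub>BijGroup E\<^esub> y" by (simp add: KG_def)
lemma KG_one [simp]: "\<one>\<^bsub>KG\<^esub> = \<one>\<^bsub>BijGroup E\<^esub>" by (simp add: KG_def)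

lemma KG_group: "group KG"
  unfolding KG_def using subgroup.subgroup_is_group[OF K_sub group_BijGroup] .

lemma KG_comm: "comm_group KG"
proof (rule group.group_comm_groupI[OF KG_group])
  fix x y assume "x \<in> carrier KG" "y \<in> carrier KG"
  then show "x \<otimes>\<^bsub>KG\<^esub> y = y \<otimes>\<^bsub>KG\<^esub> x" using K_central K_Inn by simp
qed

definition sec where "sec x = (SOME u. u \<in> E \<and> pr u = x)"

lemma sec: "x \<in> carrier G \<Longrightarrow> sec x \<in> E \<and> pr (sec x) = x"
proof -
  assume "x \<in> carrier G"
  then have "\<exists>u. u \<in> E \<and> pr u = x" using pr_surj by blast
  then show ?thesis unfolding sec_def by (rule someI_ex)
qed

lemma sec_E: "x \<in> carrier G \<Longrightarrow> sec x \<in> E" using sec by blast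
lemma pr_sec: "x \<in> carrier G \<Longrightarrow> pr (sec x) = x" using sec by blast

definition kap where "kap u v = (THE k. k \<in> K \<and> k u = v)"

lemma kap_unique: "k \<in> K \<Longrightarrow> u \<in> E \<Longrightarrow> k u = v \<Longrightarrow> kap u v = k"
  unfolding kap_def by (rule the_equality) (auto intro: K_eq)

lemma kap: assumes "u \<in> E" "v \<in> E" "pr u = pr v" shows "kap u v \<in> K" "kap u v u = v"
proof -
  obtain k where k: "k \<in> K" "k u = v" using K_fiber_trans[OF assms] by blast
  then have "kap u v = k" using kap_unique assms(1) by blast
  then show "kap u v \<in> K" "kap u v u = v" using k by simp_all
qed

definition hmap where "hmap s x = pr (s (sec x))"

definition cc where "cc s x = kap (sec (hmap s x)) (s (sec x))"

lemma hmap_G: "s \<in> Inn \<Longrightarrow> x \<in> carrier G \<Longrightarrow> hmap s x \<in> carrier G"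
  unfolding hmap_def using pr_E B_in_E[OF Inn_B sec_E] by blast

lemma cc_K: "s \<in> Inn \<Longrightarrow> x \<in> carrier G \<Longrightarrow> cc s x \<in> K"
proof -
  assume s: "s \<in> Inn" and x: "x \<in> carrier G"
  have w: "s (sec x) \<in> E" using B_in_E[OF Inn_B[OF s] sec_E[OF x]] .
  have h: "hmap s x \<in> carrier G" using hmap_G[OF s x] .
  show ?thesis unfolding cc_def using kap(1)[OF sec_E[OF h] w] pr_sec[OF h] by (simp add: hmap_def)
qed

lemma cc_apply: "s \<in> Inn \<Longrightarrow> x \<in> carrier G \<Longrightarrow> cc s x (sec (hmap s x)) = s (sec x)"
proof -
  assume s: "s \<in> Inn" and x: "x \<in> carrier G"
  have w: "s (sec x) \<in> E" using B_in_E[OF Inn_B[OF s] sec_E[OF x]] .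
  have h: "hmap s x \<in> carrier G" using hmap_G[OF s x] .
  show ?thesis unfolding cc_def using kap(2)[OF sec_E[OF h] w] pr_sec[OF h] by (simp add: hmap_def)
qed

lemma hmap_inj: "s \<in> Inn \<Longrightarrow> inj_on (hmap s) (carrier G)"
proof (rule inj_onI)
  fix x y assume s: "s \<in> Inn" and x: "x \<in> carrier G" and y: "y \<in> carrier G" and e: "hmap s x = hmap s y"
  have "pr (sec x) = pr (sec y)" using e Inn_fib[OF s sec_E[OF x] sec_E[OF y]] by (simp add: hmap_def)
  then show "x = y" using pr_sec x y by simp
qed

lemma hmap_img: "s \<in> Inn \<Longrightarrow> hmap s ` carrier G = carrier G"
  using endo_inj_surj[OF finG _ hmap_inj] hmap_G by blast

lemma cc_mult:
  assumes s: "s \<in> Inn" and t: "t \<in> Inn" and x: "x \<in> carrier G"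
  shows "cc (s \<otimes>\<^bsub>BijGroup E\<^esub> t) x = cc t x \<otimes>\<^bsub>BijGroup E\<^esub> cc s (hmap t x)"
proof -
  have sB: "s \<in> carrier (BijGroup E)" and tB: "t \<in> carrier (BijGroup E)" using Inn_B s t by blast+
  have st: "s \<otimes>\<^bsub>BijGroup E\<^esub> t \<in> Inn" using subgroup.m_closed[OF Inn_sub s t] .
  define u where "u = sec x"
  have u: "u \<in> E" using sec_E[OF x] by (simp add: u_def)
  define w where "w = t u"
  have w: "w \<in> E" using B_in_E[OF tB u] by (simp add: w_def)
  define y where "y = hmap t x"
  have y: "y \<in> carrier G" using hmap_G[OF t x] by (simp add: y_def)
  have ypw: "y = pr w" by (simp add: y_def hmap_def w_def u_def)
  define k1 where "k1 = cc t x"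
  have k1: "k1 \<in> K" using cc_K[OF t x] by (simp add: k1_def)
  have k1a: "k1 (sec y) = w" using cc_apply[OF t x] by (simp add: k1_def y_def w_def u_def)
  define z where "z = hmap s y"
  have z: "z \<in> carrier G" using hmap_G[OF s y] by (simp add: z_def)
  define k2 where "k2 = cc s y"
  have k2: "k2 \<in> K" using cc_K[OF s y] by (simp add: k2_def)
  have k2a: "k2 (sec z) = s (sec y)" using cc_apply[OF s y] by (simp add: k2_def z_def)
  have syE: "s (sec y) \<in> E" using B_in_E[OF sB sec_E[OF y]] .
  have stu: "(s \<otimes>\<^bsub>BijGroup E\<^esub> t) u = s w" using B_mult_apply[OF sB tB u] by (simp add: w_def)
  have "pr (s w) = pr (s (sec y))" using Inn_fib[OF s w sec_E[OF y]] pr_sec[OF y] ypw by simp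
  then have hz: "hmap (s \<otimes>\<^bsub>BijGroup E\<^esub> t) x = z"
    using stu by (simp add: hmap_def z_def u_def)
  have "(k1 \<otimes>\<^bsub>BijGroup E\<^esub> k2) (sec z) = k1 (k2 (sec z))"
    using B_mult_apply[OF K_B[OF k1] K_B[OF k2] sec_E[OF z]] .
  also have "\<dots> = k1 (s (sec y))" using k2a by simp
  also have "\<dots> = s (k1 (sec y))" using K_central_pt[OF k1 s sec_E[OF y]] .
  also have "\<dots> = s w" using k1a by simp
  finally have e: "(k1 \<otimes>\<^bsub>BijGroup E\<^esub> k2) (sec z) = (s \<otimes>\<^bsub>BijGroup E\<^esub> t) (sec x)"
    using stu by (simp add: u_def)
  have kk: "k1 \<otimes>\<^bsub>BijGroup E\<^esub> k2 \<in> K" using subgroup.m_closed[OF K_sub k1 k2] .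
  have "cc (s \<otimes>\<^bsub>BijGroup E\<^esub> t) x = kap (sec z) ((s \<otimes>\<^bsub>BijGroup E\<^esub> t) (sec x))"
    unfolding cc_def hz ..
  also have "\<dots> = k1 \<otimes>\<^bsub>BijGroup E\<^esub> k2" using kap_unique[OF kk sec_E[OF z] e] .
  finally show ?thesis by (simp add: k1_def k2_def y_def)
qed

definition V where "V s = finprod KG (cc s) (carrier G)"

lemma cc_Pi: "s \<in> Inn \<Longrightarrow> cc s \<in> carrier G \<rightarrow> carrier KG"
  using cc_K by auto

lemma V_K: "s \<in> Inn \<Longrightarrow> V s \<in> K"
proof -
  assume s: "s \<in> Inn"
  interpret KG: comm_group KG by (rule KG_comm)
  show ?thesis unfolding V_def using KG.finprod_closed[OF cc_Pi[OF s]] by simp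
qed

lemma V_mult:
  assumes s: "s \<in> Inn" and t: "t \<in> Inn"
  shows "V (s \<otimes>\<^bsub>BijGroup E\<^esub> t) = V t \<otimes>\<^bsub>BijGroup E\<^esub> V s"
proof -
  interpret KG: comm_group KG by (rule KG_comm)
  have p1: "cc t \<in> carrier G \<rightarrow> carrier KG" using cc_Pi[OF t] .
  have p2: "(\<lambda>x. cc s (hmap t x)) \<in> carrier G \<rightarrow> carrier KG" using cc_K[OF s hmap_G[OF t]] by auto
  have "V (s \<otimes>\<^bsub>BijGroup E\<^esub> t) = finprod KG (\<lambda>x. cc t x \<otimes>\<^bsub>KG\<^esub> cc s (hmap t x)) (carrier G)"
    unfolding V_def
  proof (rule KG.finprod_cong')
    show "(\<lambda>x. cc t x \<otimes>\<^bsub>KG\<^esub> cc s (hmap t x)) \<in> carrier G \<rightarrow> carrier KG"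
    proof
      fix x assume "x \<in> carrier G"
      then have "cc t x \<in> carrier KG" "cc s (hmap t x) \<in> carrier KG" using p1 p2 by auto
      then show "cc t x \<otimes>\<^bsub>KG\<^esub> cc s (hmap t x) \<in> carrier KG" by (rule KG.m_closed)
    qed
    fix x assume "x \<in> carrier G"
    then show "cc (s \<otimes>\<^bsub>BijGroup E\<^esub> t) x = cc t x \<otimes>\<^bsub>KG\<^esub> cc s (hmap t x)"
      using cc_mult[OF s t] by simp
  qed simp
  also have "\<dots> = finprod KG (cc t) (carrier G) \<otimes>\<^bsub>KG\<^esub> finprod KG (\<lambda>x. cc s (hmap t x)) (carrier G)"
    using KG.finprod_multf[OF p1 p2] .
  also have "finprod KG (\<lambda>x. cc s (hmap t x)) (carrier G) = finprod KG (cc s) (hmap t ` carrier G)"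
    using KG.finprod_reindex[of "cc s" "hmap t" "carrier G"] hmap_inj[OF t] cc_Pi[OF s] hmap_img[OF t] by simp
  also have "\<dots> = V s" unfolding V_def hmap_img[OF t] ..
  finally show ?thesis by (simp add: V_def)
qed

end


context cov
begin

lemma one_Inn: "\<one>\<^bsub>BijGroup E\<^esub> \<in> Inn" using subgroup.one_closed[OF Inn_sub] .

lemma V_one: "V \<one>\<^bsub>BijGroup E\<^esub> = \<one>\<^bsub>BijGroup E\<^esub>"
proof -
  interpret KG: comm_group KG by (rule KG_comm)
  have v: "V \<one>\<^bsub>BijGroup E\<^esub> \<in> carrier KG" using V_K[OF one_Inn] by simp
  have "V \<one>\<^bsub>BijGroup E\<^esub> = V (\<one>\<^bsub>BijGroup E\<^esub> \<otimes>\<^bsub>BijGroup E\<^esub> \<one>\<^bsub>BijGroup E\<^esub>)" by simp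
  also have "\<dots> = V \<one>\<^bsub>BijGroup E\<^esub> \<otimes>\<^bsub>KG\<^esub> V \<one>\<^bsub>BijGroup E\<^esub>" using V_mult[OF one_Inn one_Inn] by simp
  finally have "\<one>\<^bsub>KG\<^esub> \<otimes>\<^bsub>KG\<^esub> V \<one>\<^bsub>BijGroup E\<^esub> = V \<one>\<^bsub>BijGroup E\<^esub> \<otimes>\<^bsub>KG\<^esub> V \<one>\<^bsub>BijGroup E\<^esub>"
    using K_B[OF V_K[OF one_Inn]] by simp
  then have "\<one>\<^bsub>KG\<^esub> = V \<one>\<^bsub>BijGroup E\<^esub>" using KG.right_cancel[OF v KG.one_closed v] by blast
  then show ?thesis by simp
qed

lemma V_inv:
  assumes s: "s \<in> Inn"
  shows "V (inv\<^bsub>BijGroup E\<^esub> s) \<otimes>\<^bsub>BijGroup E\<^esub> V s = \<one>\<^bsub>BijGroup E\<^esub>"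
proof -
  have i: "inv\<^bsub>BijGroup E\<^esub> s \<in> Inn" using subgroup.m_inv_closed[OF Inn_sub s] .
  have "V (s \<otimes>\<^bsub>BijGroup E\<^esub> inv\<^bsub>BijGroup E\<^esub> s) = V (inv\<^bsub>BijGroup E\<^esub> s) \<otimes>\<^bsub>BijGroup E\<^esub> V s"
    using V_mult[OF s i] .
  moreover have "s \<otimes>\<^bsub>BijGroup E\<^esub> inv\<^bsub>BijGroup E\<^esub> s = \<one>\<^bsub>BijGroup E\<^esub>" using Inn_B[OF s] by simp
  ultimately show ?thesis using V_one by simp
qed

lemma Lt_conj:
  assumes s: "s \<in> Inn" and a: "a \<in> E"
  shows "s \<otimes>\<^bsub>BijGroup E\<^esub> Lt a \<otimes>\<^bsub>BijGroup E\<^esub> inv\<^bsub>BijGroup E\<^esub> s = Lt (s a)"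
proof (rule B_eqI)
  have sB: "s \<in> carrier (BijGroup E)" using Inn_B[OF s] .
  have sa: "s a \<in> E" using B_in_E[OF sB a] .
  show "s \<otimes>\<^bsub>BijGroup E\<^esub> Lt a \<otimes>\<^bsub>BijGroup E\<^esub> inv\<^bsub>BijGroup E\<^esub> s \<in> carrier (BijGroup E)"
    using sB Lt_B[OF a] by simp
  show "Lt (s a) \<in> carrier (BijGroup E)" using Lt_B[OF sa] .
  fix w assume w: "w \<in> E"
  have iw: "(inv\<^bsub>BijGroup E\<^esub> s) w \<in> E" using B_in_E[OF B.inv_closed[OF sB] w] .
  have "(s \<otimes>\<^bsub>BijGroup E\<^esub> Lt a \<otimes>\<^bsub>BijGroup E\<^esub> inv\<^bsub>BijGroup E\<^esub> s) w = s (Lt a ((inv\<^bsub>BijGroup E\<^esub> s) w))"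
    using B_mult_apply[OF B.m_closed[OF sB Lt_B[OF a]] B.inv_closed[OF sB] w]
      B_mult_apply[OF sB Lt_B[OF a] iw] by simp
  also have "\<dots> = s (opE a ((inv\<^bsub>BijGroup E\<^esub> s) w))" using iw by (simp add: Lt_apply)
  also have "\<dots> = opE (s a) (s ((inv\<^bsub>BijGroup E\<^esub> s) w))" using Inn_aut[OF s a iw] .
  also have "\<dots> = opE (s a) w" using B_inv_apply1[OF sB w] by simp
  also have "\<dots> = Lt (s a) w" using w by (simp add: Lt_apply)
  finally show "(s \<otimes>\<^bsub>BijGroup E\<^esub> Lt a \<otimes>\<^bsub>BijGroup E\<^esub> inv\<^bsub>BijGroup E\<^esub> s) w = Lt (s a) w" .
qed

lemma V_conj:
  assumes s: "s \<in> Inn" and a: "a \<in> E"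
  shows "V (Lt (s a)) = V (Lt a)"
proof -
  interpret KG: comm_group KG by (rule KG_comm)
  have i: "inv\<^bsub>BijGroup E\<^esub> s \<in> Inn" using subgroup.m_inv_closed[OF Inn_sub s] .
  have sL: "s \<otimes>\<^bsub>BijGroup E\<^esub> Lt a \<in> Inn" using subgroup.m_closed[OF Inn_sub s Lt_Inn[OF a]] .
  have vs: "V s \<in> carrier KG" "V (inv\<^bsub>BijGroup E\<^esub> s) \<in> carrier KG" "V (Lt a) \<in> carrier KG"
    using V_K s i Lt_Inn[OF a] by simp_all
  have "V (Lt (s a)) = V (s \<otimes>\<^bsub>BijGroup E\<^esub> Lt a \<otimes>\<^bsub>BijGroup E\<^esub> inv\<^bsub>BijGroup E\<^esub> s)"
    using Lt_conj[OF s a] by simp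
  also have "\<dots> = V (inv\<^bsub>BijGroup E\<^esub> s) \<otimes>\<^bsub>KG\<^esub> (V (Lt a) \<otimes>\<^bsub>KG\<^esub> V s)"
    using V_mult[OF sL i] V_mult[OF s Lt_Inn[OF a]] by simp
  also have "\<dots> = V (Lt a) \<otimes>\<^bsub>KG\<^esub> (V (inv\<^bsub>BijGroup E\<^esub> s) \<otimes>\<^bsub>KG\<^esub> V s)"
    using vs by (metis KG.m_lcomm)
  also have "\<dots> = V (Lt a)" using V_inv[OF s] K_B[OF V_K[OF Lt_Inn[OF a]]] by simp
  finally show ?thesis .
qed

lemma V_Lt_const: "a \<in> E \<Longrightarrow> b \<in> E \<Longrightarrow> V (Lt b) = V (Lt a)"
proof -
  assume a: "a \<in> E" and b: "b \<in> E"
  obtain s where "s \<in> Inn" "s a = b" using Inn_trans[OF a b] by blast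
  then show ?thesis using V_conj[OF _ a] by blast
qed

lemma V_DG: "h \<in> DG \<Longrightarrow> V h = \<one>\<^bsub>BijGroup E\<^esub>"
proof -
  assume "h \<in> DG"
  then obtain a b where ab: "a \<in> E" "b \<in> E" "h = Lt a \<otimes>\<^bsub>BijGroup E\<^esub> inv\<^bsub>BijGroup E\<^esub> (Lt b)"
    unfolding DG_def by blast
  have i: "inv\<^bsub>BijGroup E\<^esub> (Lt b) \<in> Inn" using subgroup.m_inv_closed[OF Inn_sub Lt_Inn[OF ab(2)]] .
  have "V h = V (inv\<^bsub>BijGroup E\<^esub> (Lt b)) \<otimes>\<^bsub>BijGroup E\<^esub> V (Lt a)" using V_mult[OF Lt_Inn[OF ab(1)] i] ab(3) by simp
  also have "\<dots> = V (inv\<^bsub>BijGroup E\<^esub> (Lt b)) \<otimes>\<^bsub>BijGroup E\<^esub> V (Lt b)" using V_Lt_const[OF ab(2) ab(1)] by simp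
  also have "\<dots> = \<one>\<^bsub>BijGroup E\<^esub>" using V_inv[OF Lt_Inn[OF ab(2)]] .
  finally show ?thesis .
qed

lemma V_Dis: "d \<in> Dis \<Longrightarrow> V d = \<one>\<^bsub>BijGroup E\<^esub>"
proof -
  assume d: "d \<in> Dis"
  then show ?thesis unfolding Dis_def
  proof (induction d rule: generate.induct)
    case one
    then show ?case by (rule V_one)
  next
    case (incl h)
    then show ?case by (rule V_DG)
  next
    case (inv h)
    interpret KG: comm_group KG by (rule KG_comm)
    have hI: "h \<in> Inn" using inv.hyps DG_Inn by blast
    have vi: "V (inv\<^bsub>BijGroup E\<^esub> h) \<in> carrier KG" using V_K subgroup.m_inv_closed[OF Inn_sub hI] by simp
    have "V (inv\<^bsub>BijGroup E\<^esub> h) \<otimes>\<^bsub>BijGroup E\<^esub> \<one>\<^bsub>BijGroup E\<^esub> = \<one>\<^bsub>BijGroup E\<^esub>"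
      using V_inv[OF hI] V_DG[OF inv.hyps] by simp
    then show ?case using KG.r_one[OF vi] by simp
  next
    case (eng h1 h2)
    have "h1 \<in> Inn" "h2 \<in> Inn" using eng.hyps Dis_Inn unfolding Dis_def by blast+
    then show ?case using V_mult eng.IH V_one by simp
  qed
qed

lemma V_K_pow: "k \<in> K \<Longrightarrow> V k = k [^]\<^bsub>KG\<^esub> card (carrier G)"
proof -
  assume k: "k \<in> K"
  interpret KG: comm_group KG by (rule KG_comm)
  have kI: "k \<in> Inn" using K_Inn[OF k] .
  have "\<And>x. x \<in> carrier G \<Longrightarrow> cc k x = k"
  proof -
    fix x assume x: "x \<in> carrier G"
    have h: "hmap k x = x" unfolding hmap_def using K_pr[OF k sec_E[OF x]] pr_sec[OF x] by simp
    show "cc k x = k" unfolding cc_def h using kap_unique[OF k sec_E[OF x]] by simp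
  qed
  then have "V k = finprod KG (\<lambda>x. k) (carrier G)" unfolding V_def
    by (intro KG.finprod_cong') (use k in auto)
  also have "\<dots> = k [^]\<^bsub>KG\<^esub> card (carrier G)" using KG.finprod_const k by simp
  finally show ?thesis .
qed

lemma K_exp: "k \<in> K \<Longrightarrow> k [^]\<^bsub>KG\<^esub> card (carrier G) = \<one>\<^bsub>KG\<^esub>"
  using V_K_pow V_Dis K_Dis by simp

end


context cov
begin

lemma E_ne: "E \<noteq> {}"
  using pr_surj[OF G.one_closed] by blast

lemma card_E: "card E = card (carrier G) * card K"
proof -
  define phi where "phi u = (pr u, kap (sec (pr u)) u)" for u
  have "bij_betw phi E (carrier G \<times> K)"
  proof (rule bij_betw_imageI)
    show "inj_on phi E"
    proof (rule inj_onI)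
      fix u v assume u: "u \<in> E" and v: "v \<in> E" and e: "phi u = phi v"
      have e': "pr u = pr v \<and> kap (sec (pr u)) u = kap (sec (pr v)) v" using e unfolding phi_def prod.inject .
      define x where "x = pr u"
      have p: "pr v = x" using e' by (simp add: x_def)
      have pu: "pr u = x" by (simp add: x_def)
      have c2: "kap (sec (pr u)) u = kap (sec (pr v)) v" using e' by (rule conjunct2)
      have kk: "kap (sec x) u = kap (sec x) v" using c2 p pu by metis
      have x: "x \<in> carrier G" using pr_E[OF u] by (simp add: x_def)
      have ps: "pr (sec x) = x" using pr_sec[OF x] .
      have psu: "pr (sec x) = pr u" using ps pu by simp
      have psv: "pr (sec x) = pr v" using ps p by simp
      have "u = kap (sec x) u (sec x)" using kap(2)[OF sec_E[OF x] u psu] by simp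
      also have "\<dots> = kap (sec x) v (sec x)" using kk by simp
      also have "\<dots> = v" using kap(2)[OF sec_E[OF x] v psv] .
      finally show "u = v" .
    qed
  next
    show "phi ` E = carrier G \<times> K"
    proof
      show "phi ` E \<subseteq> carrier G \<times> K"
      proof
        fix z assume "z \<in> phi ` E"
        then obtain u where u: "u \<in> E" "z = phi u" by blast
        have x: "pr u \<in> carrier G" using pr_E[OF u(1)] .
        have "kap (sec (pr u)) u \<in> K" using kap(1)[OF sec_E[OF x] u(1)] pr_sec[OF x] by simp
        then show "z \<in> carrier G \<times> K" using u x by (simp add: phi_def)
      qed
    next
      show "carrier G \<times> K \<subseteq> phi ` E"
      proof
        fix z assume "z \<in> carrier G \<times> K"
        then obtain x k where xk: "x \<in> carrier G" "k \<in> K" "z = (x, k)" by blast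
        define u where "u = k (sec x)"
        have u: "u \<in> E" using B_in_E[OF K_B[OF xk(2)] sec_E[OF xk(1)]] by (simp add: u_def)
        have pu: "pr u = x" using K_pr[OF xk(2) sec_E[OF xk(1)]] pr_sec[OF xk(1)] by (simp add: u_def)
        have "kap (sec x) u = k" using kap_unique[OF xk(2) sec_E[OF xk(1)]] by (simp add: u_def)
        then have "phi u = z" using pu xk(3) by (simp add: phi_def)
        then show "z \<in> phi ` E" using u by blast
      qed
    qed
  qed
  then have "card E = card (carrier G \<times> K)" by (rule bij_betw_same_card)
  then show ?thesis by (simp add: card_cartesian_product)
qed

lemma K_finite: "finite K"
proof -
  obtain u0 where u0: "u0 \<in> E" using E_ne by blast
  have "inj_on (\<lambda>k. k u0) K" by (rule inj_onI) (use K_eq u0 in blast)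
  moreover have "(\<lambda>k. k u0) ` K \<subseteq> E"
  proof
    fix z assume "z \<in> (\<lambda>k. k u0) ` K"
    then obtain k where "k \<in> K" "z = k u0" by blast
    then show "z \<in> E" using B_in_E[OF K_B[OF \<open>k \<in> K\<close>] u0] by simp
  qed
  ultimately show ?thesis using inj_on_finite finE by blast
qed

lemma K_primes:
  assumes p: "Factorial_Ring.prime (p::nat)" and d: "p dvd card K"
  shows "p dvd card (carrier G)"
proof -
  interpret KG: comm_group KG by (rule KG_comm)
  have fin: "finite (carrier KG)" using K_finite by simp
  obtain m where m: "card K = p * m" using d by blast
  have "order KG = p ^ 1 * m" using m by (simp add: order_def)
  then obtain H where H: "subgroup H KG" "card H = p ^ 1"
    using sylow_thm[OF p KG_group _ fin] by blast
  have "card H \<ge> 2" using H(2) prime_ge_2_nat[OF p] by simp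
  have "\<not> H \<subseteq> {\<one>\<^bsub>KG\<^esub>}"
  proof
    assume "H \<subseteq> {\<one>\<^bsub>KG\<^esub>}"
    then have "card H \<le> card {\<one>\<^bsub>KG\<^esub>}" by (intro card_mono) simp_all
    then show False using \<open>card H \<ge> 2\<close> by simp
  qed
  then obtain h where h: "h \<in> H" "h \<noteq> \<one>\<^bsub>KG\<^esub>" by blast
  have hK: "h \<in> carrier KG" using h(1) subgroup.subset[OF H(1)] by blast
  interpret HG: group "KG\<lparr>carrier := H\<rparr>" using subgroup.subgroup_is_group[OF H(1) KG_group] .
  have finH: "finite H" using fin subgroup.subset[OF H(1)] finite_subset by blast
  have "h [^]\<^bsub>KG\<lparr>carrier := H\<rparr>\<^esub> order (KG\<lparr>carrier := H\<rparr>) = \<one>\<^bsub>KG\<lparr>carrier := H\<rparr>\<^esub>"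
    using HG.pow_order_eq_1[of h] h(1) by simp
  then have "h [^]\<^bsub>KG\<^esub> p = \<one>\<^bsub>KG\<^esub>"
    using H(2) by (simp add: order_def KG.nat_pow_consistent[symmetric])
  then have o1: "KG.ord h dvd p" using KG.pow_eq_id[OF hK] by simp
  have "h [^]\<^bsub>KG\<^esub> card (carrier G) = \<one>\<^bsub>KG\<^esub>" using K_exp hK by simp
  then have o2: "KG.ord h dvd card (carrier G)" using KG.pow_eq_id[OF hK] by simp
  have "KG.ord h \<noteq> 1" using KG.ord_eq_1[OF hK] h(2) by simp
  then have "KG.ord h = p" using o1 p prime_nat_iff by blast
  then show ?thesis using o2 by simp
qed

lemma rad_eq: "rad (card E) = rad (card (carrier G))"
proof -
  have n0: "card (carrier G) \<noteq> 0" using finG G.one_closed by (metis card_0_eq empty_iff)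
  have e0: "card E \<noteq> 0" using finE E_ne by simp
  have "prime_factors (card E) = prime_factors (card (carrier G))"
  proof (rule Set.set_eqI)
    fix p
    show "p \<in> prime_factors (card E) \<longleftrightarrow> p \<in> prime_factors (card (carrier G))"
    proof
      assume "p \<in> prime_factors (card E)"
      then have p: "Factorial_Ring.prime p" and "p dvd card (carrier G) * card K" using card_E by (auto simp: in_prime_factors_iff)
      then have "p dvd card (carrier G) \<or> p dvd card K" using prime_dvd_mult_iff by blast
      then have "p dvd card (carrier G)" using K_primes[OF p] by blast
      then show "p \<in> prime_factors (card (carrier G))" using p n0 by (simp add: in_prime_factors_iff)
    next
      assume "p \<in> prime_factors (card (carrier G))"
      then have p: "Factorial_Ring.prime p" and "p dvd card (carrier G)" by (auto simp: in_prime_factors_iff)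
      then have "p dvd card E" using card_E by simp
      then show "p \<in> prime_factors (card E)" using p e0 by (simp add: in_prime_factors_iff)
    qed
  qed
  then show ?thesis by (simp add: rad_def)
qed

end

theorem proposition3p10:
  fixes G :: "('a, 'm) monoid_scheme" and f :: "'a \<Rightarrow> 'a"
    and E :: "'e set" and opE :: "'e \<Rightarrow> 'e \<Rightarrow> 'e" and \<pi> :: "'e \<Rightarrow> 'a"
  assumes "group G" and "finite (carrier G)" and "nilpotent_group G"
    and "f \<in> iso G G"
    and "finite E"
    and "connected_cover E opE (carrier G) (QGf_op G f) \<pi>"
  shows "rad (card E) = rad (card (carrier G))"
proof -
  interpret cov G f E opE \<pi>
    using assms unfolding connected_cover_def by (intro cov.intro) simp_all
  show ?thesis by (rule rad_eq)
qed


end
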